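(* Let $k\ge 2$ and let $\mathcal{S}=\{\mathcal{S}_1,\ldots,\mathcal{S}_{q^k+1}\}$ be a $k$-spread of $\mathbb{F}_q^{2k}$. For each $i$ let $\mathrm{S}_i$ be a full-rank $k\times 2k$ matrix over $\mathbb{F}_q$ with row space $\mathcal{S}_i$. Define the $2k\times 2k$ matrices $\mathrm{W}_i=\begin{pmatrix}\mathrm{S}_i\\ \mathrm{S}_{i+1}\end{pmatrix}$ for $i=1,\ldots,q^k$ and $\mathrm{W}_{q^k+1}=\begin{pmatrix}\mathrm{S}_{q^k+1}\\ \mathrm{S}_1\end{pmatrix}$, and for $1\le j\le 2k-1$ let $\mathcal{W}_i^{(j)}$ be the row space of the first $j$ rows of $\mathrm{W}_i$. Then for every $1\le j\le 2k-1$ the set $\mathcal{C}_j=\{\mathcal{W}_i^{(j)} : i=1,\ldots,q^k+1\}$ is a set of $j$-dimensional subspaces of $\mathbb{F}_q^{2k}$ with $|\mathcal{C}_j|=|\mathcal{S}|$. Moreover: (1) for $1\le j\le k$, $\mathcal{C}_j$ is a partial spread, i.e. distinct elements intersect trivially; (2) for $k<j\le 2k-1$, any two distinct elements of $\mathcal{C}_j$ intersect in a subspace of dimension exactly $2(j-k)$, so that the subspace distance between any two distinct elements of $\mathcal{C}_j$ is $2(2k-j)$, the maximum possible distance between two $j$-dimensional subspaces of $\mathbb{F}_q^{2k}$.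
   Context: $q$ is a prime power. A $k$-spread of $\mathbb{F}_q^{2k}$ (planar spread) is a set of $k$-dimensional subspaces of $\mathbb{F}_q^{2k}$ pairwise intersecting trivially with cardinality $q^k+1$; any two distinct members then sum to $\mathbb{F}_q^{2k}$. The subspace distance is $d_S(\mathcal{U},\mathcal{V})=\dim(\mathcal{U}+\mathcal{V})-\dim(\mathcal{U}\cap\mathcal{V})$. *)

theory Defs
  imports "HOL-Analysis.Analysis"
begin

text \<open>Vectors of F_q^{2k} are elements of 'a^'n with 'a a finite field and CARD('n) = 2k.
  Subspaces are sets of vectors; dimension is the library's vec.dim.\<close>

definition subspace_dist :: "('a::field ^ 'n) set \<Rightarrow> ('a ^ 'n) set \<Rightarrow> nat" where
  "subspace_dist U V = vec.dim (vec.span (U \<union> V)) - vec.dim (U \<inter> V)"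

definition k_spread :: "nat \<Rightarrow> ('a::{field,finite} ^ 'n) set set \<Rightarrow> bool" where
  "k_spread k SS \<longleftrightarrow> finite SS \<and> card SS = CARD('a) ^ k + 1 \<and>
     (\<forall>U\<in>SS. vec.subspace U \<and> vec.dim U = k) \<and>
     (\<forall>U\<in>SS. \<forall>V\<in>SS. U \<noteq> V \<longrightarrow> U \<inter> V = {0})"

text \<open>Rows of W_i (0-based indices): the k rows of S_i followed by the k rows of S_{i+1},
  indices of the spread taken cyclically modulo N = q^k+1.\<close>
definition W_row :: "nat \<Rightarrow> nat \<Rightarrow> (nat \<Rightarrow> nat \<Rightarrow> 'v) \<Rightarrow> nat \<Rightarrow> nat \<Rightarrow> 'v" where
  "W_row k N M i r = (if r < k then M i r else M (Suc i mod N) (r - k))"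

definition W_sub :: "nat \<Rightarrow> nat \<Rightarrow> (nat \<Rightarrow> nat \<Rightarrow> 'a::field ^ 'n) \<Rightarrow> nat \<Rightarrow> nat \<Rightarrow> ('a ^ 'n) set" where
  "W_sub k N M i j = vec.span (W_row k N M i ` {..<j})"

end

theory Submission
  imports Defs
begin


lemma dimUn:
  fixes S T :: "('a::field ^ 'n) set"
  assumes "vec.subspace S" "vec.subspace T"
  shows "vec.dim (vec.span (S \<union> T)) + vec.dim (S \<inter> T) = vec.dim S + vec.dim T"
proof -
  have "vec.span (S \<union> T) = {x + y |x y. x \<in> S \<and> y \<in> T}"
  proof -
    have "vec.span S = S" "vec.span T = T" using assms by simp_all
    then show ?thesis using vec.span_Un[of S T] by (simp del: vec.span_eq_iff)
  qed
  then show ?thesis using vec.dim_sums_Int[OF assms] by simp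
qed

lemma span_Un_span:
  fixes A B :: "('a::field ^ 'n) set"
  shows "vec.span (A \<union> B) = vec.span (vec.span A \<union> vec.span B)"
proof (rule antisym)
  show "vec.span (A \<union> B) \<subseteq> vec.span (vec.span A \<union> vec.span B)"
    by (intro vec.span_mono) (use vec.span_superset in blast)
  show "vec.span (vec.span A \<union> vec.span B) \<subseteq> vec.span (A \<union> B)"
    by (intro vec.span_minimal) (auto intro: vec.span_mono[THEN subsetD])
qed

theorem proposition4p3:
  fixes SS :: "('a::{field,finite} ^ 'n) set set"
    and Sp :: "nat \<Rightarrow> ('a ^ 'n) set"
    and M :: "nat \<Rightarrow> nat \<Rightarrow> 'a ^ 'n"
    and k N :: nat
  assumes k2: "k \<ge> 2"
    and dimn: "CARD('n) = 2 * k"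
    and spread: "k_spread k SS"
    and N_def: "N = CARD('a) ^ k + 1"
    and enum: "bij_betw Sp {..<N} SS"
    and rank: "\<forall>i<N. vec.dim (vec.span (M i ` {..<k})) = k"
    and rowsp: "\<forall>i<N. vec.span (M i ` {..<k}) = Sp i"
  shows "\<forall>j\<in>{1..2*k-1}.
           (\<forall>i<N. vec.subspace (W_sub k N M i j) \<and> vec.dim (W_sub k N M i j) = j)
         \<and> card ((\<lambda>i. W_sub k N M i j) ` {..<N}) = card SS
         \<and> (j \<le> k \<longrightarrow>
              (\<forall>U\<in>(\<lambda>i. W_sub k N M i j) ` {..<N}. \<forall>V\<in>(\<lambda>i. W_sub k N M i j) ` {..<N}.
                 U \<noteq> V \<longrightarrow> U \<inter> V = {0}))
         \<and> (k < j \<longrightarrow>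
              (\<forall>U\<in>(\<lambda>i. W_sub k N M i j) ` {..<N}. \<forall>V\<in>(\<lambda>i. W_sub k N M i j) ` {..<N}.
                 U \<noteq> V \<longrightarrow> vec.dim (U \<inter> V) = 2 * (j - k)
                        \<and> subspace_dist U V = 2 * (2 * k - j))
            \<and> (\<forall>U V :: ('a ^ 'n) set. vec.subspace U \<and> vec.dim U = j \<and> vec.subspace V \<and> vec.dim V = j
                 \<longrightarrow> subspace_dist U V \<le> 2 * (2 * k - j)))"
proof -
  define q where "q = CARD('a)"
  have q2: "q \<ge> 2"
  proof -
    have "{0::'a, 1} \<subseteq> UNIV" by simp
    then have "card {0::'a, 1} \<le> q" unfolding q_def by (intro card_mono) auto
    then show ?thesis by simp
  qed
  have "q ^ k \<ge> 2" using q2 k2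
    by (metis le_trans one_le_numeral power_increasing power_one_right Suc_1 Suc_leD)
  then have N3: "N \<ge> 3" using N_def q_def by simp
  have SS: "finite SS" "card SS = q ^ k + 1" "\<forall>U\<in>SS. vec.subspace U \<and> vec.dim U = k"
      "\<forall>U\<in>SS. \<forall>V\<in>SS. U \<noteq> V \<longrightarrow> U \<inter> V = {0}"
    using spread unfolding k_spread_def q_def by auto
  have cardSS: "card SS = N" using bij_betw_same_card[OF enum] by simp
  have Spin: "\<And>i. i < N \<Longrightarrow> Sp i \<in> SS" using enum by (auto simp: bij_betw_def)
  have Spsub: "\<And>i. i < N \<Longrightarrow> vec.subspace (Sp i)" and Spdim: "\<And>i. i < N \<Longrightarrow> vec.dim (Sp i) = k"
    using Spin SS(3) by auto
  have disj: "\<And>i l. i < N \<Longrightarrow> l < N \<Longrightarrow> i \<noteq> l \<Longrightarrow> Sp i \<inter> Sp l = {0}"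
  proof -
    fix i l assume "i < N" "l < N" "i \<noteq> l"
    then have "Sp i \<noteq> Sp l" using enum by (auto simp: bij_betw_def inj_on_def)
    then show "Sp i \<inter> Sp l = {0}" using SS(4) Spin \<open>i < N\<close> \<open>l < N\<close> by blast
  qed
  have dimle: "\<And>X :: ('a ^ 'n) set. vec.dim X \<le> 2 * k"
    using dim_subset_UNIV_cart_gen dimn by metis
  have indep: "vec.independent (M i ` {..<k}) \<and> inj_on (M i) {..<k}" if "i < N" for i
  proof -
    let ?X = "M i ` {..<k}"
    have d: "vec.dim ?X = k" using rank that by simp
    have "?X \<subseteq> vec.span ?X" by (rule vec.span_superset)
    then have "vec.dim ?X \<le> card ?X" by (rule vec.dim_le_card) simp
    moreover have "card ?X \<le> k" using card_image_le[of "{..<k}" "M i"] by simp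
    ultimately have c: "card ?X = k" using d by simp
    then have "inj_on (M i) {..<k}" by (intro eq_card_imp_inj_on) auto
    moreover have "vec.independent ?X"
      by (rule vec.card_le_dim_spanning[of _ ?X]) (use \<open>?X \<subseteq> vec.span ?X\<close> in \<open>auto simp: c d\<close>)
    ultimately show ?thesis by simp
  qed
  define T where "T i j = vec.span (M i ` {..<j})" for i j
  have Tprops: "vec.subspace (T i j) \<and> vec.dim (T i j) = j \<and> T i j \<subseteq> Sp i"
    if "i < N" "j \<le> k" for i j
  proof -
    have sub: "M i ` {..<j} \<subseteq> M i ` {..<k}" using that by auto
    have "vec.independent (M i ` {..<j})" using indep[OF that(1)] vec.independent_mono sub by blast
    moreover have "card (M i ` {..<j}) = j"
      using indep[OF that(1)] that(2) by (subst card_image) (auto intro: inj_on_subset)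
    ultimately have "vec.dim (T i j) = j" unfolding T_def by (simp add: vec.dim_eq_card_independent)
    moreover have "T i j \<subseteq> Sp i" unfolding T_def using rowsp that(1) vec.span_mono[OF sub] by auto
    ultimately show ?thesis unfolding T_def by simp
  qed
  have nxt: "Suc i mod N < N \<and> Suc i mod N \<noteq> i" if "i < N" for i
  proof -
    have "Suc i mod N < N" using N3 by simp
    moreover have "Suc i mod N \<noteq> i"
    proof (cases "Suc i < N")
      case True then show ?thesis by simp
    next
      case False then have "Suc i = N" using that by simp
      then show ?thesis using N3 by simp
    qed
    ultimately show ?thesis by simp
  qed
  have Wlow: "W_sub k N M i j = T i j" if "j \<le> k" for i j
  proof -
    have "W_row k N M i ` {..<j} = M i ` {..<j}" using that by (auto simp: W_row_def)
    then show ?thesis unfolding W_sub_def T_def by simp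
  qed
  have Whigh: "W_sub k N M i j = vec.span (Sp i \<union> T (Suc i mod N) (j - k))"
    if "k < j" "i < N" for i j
  proof -
    have "W_row k N M i ` {..<j} = M i ` {..<k} \<union> M (Suc i mod N) ` {..<j - k}"
    proof (rule set_eqI, rule iffI)
      fix x assume "x \<in> W_row k N M i ` {..<j}"
      then obtain r where "r < j" "x = W_row k N M i r" by auto
      then show "x \<in> M i ` {..<k} \<union> M (Suc i mod N) ` {..<j - k}"
        by (cases "r < k") (auto simp: W_row_def)
    next
      fix x assume "x \<in> M i ` {..<k} \<union> M (Suc i mod N) ` {..<j - k}"
      then show "x \<in> W_row k N M i ` {..<j}"
      proof
        assume "x \<in> M i ` {..<k}"
        then obtain r where "r < k" "x = M i r" by auto
        then show ?thesis using that(1) by (auto simp: W_row_def intro!: image_eqI[of _ _ r])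
      next
        assume "x \<in> M (Suc i mod N) ` {..<j - k}"
        then obtain r where "r < j - k" "x = M (Suc i mod N) r" by auto
        then show ?thesis using that(1) by (auto simp: W_row_def intro!: image_eqI[of _ _ "r + k"])
      qed
    qed
    then show ?thesis unfolding W_sub_def T_def
      using span_Un_span[of "M i ` {..<k}" "M (Suc i mod N) ` {..<j - k}"] rowsp that(2) by simp
  qed
  show ?thesis
  proof
    fix j assume j: "j \<in> {1..2*k-1}"
    define Wj where "Wj i = W_sub k N M i j" for i
    have fact1: "\<forall>i<N. vec.subspace (Wj i) \<and> vec.dim (Wj i) = j"
      and inj: "inj_on Wj {..<N}"
      and low: "j \<le> k \<longrightarrow> (\<forall>U\<in>Wj ` {..<N}. \<forall>V\<in>Wj ` {..<N}. U \<noteq> V \<longrightarrow> U \<inter> V = {0})"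
      and high: "k < j \<longrightarrow> (\<forall>U\<in>Wj ` {..<N}. \<forall>V\<in>Wj ` {..<N}. U \<noteq> V \<longrightarrow>
                   vec.dim (U \<inter> V) = 2 * (j - k) \<and> subspace_dist U V = 2 * (2 * k - j))"
    proof -
      have "(\<forall>i<N. vec.subspace (Wj i) \<and> vec.dim (Wj i) = j) \<and> inj_on Wj {..<N} \<and>
        (j \<le> k \<longrightarrow> (\<forall>U\<in>Wj ` {..<N}. \<forall>V\<in>Wj ` {..<N}. U \<noteq> V \<longrightarrow> U \<inter> V = {0})) \<and>
        (k < j \<longrightarrow> (\<forall>U\<in>Wj ` {..<N}. \<forall>V\<in>Wj ` {..<N}. U \<noteq> V \<longrightarrow>
                   vec.dim (U \<inter> V) = 2 * (j - k) \<and> subspace_dist U V = 2 * (2 * k - j)))"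
      proof (cases "j \<le> k")
        case True
        have W: "\<And>i. Wj i = T i j" using Wlow True unfolding Wj_def by simp
        have f1: "\<forall>i<N. vec.subspace (Wj i) \<and> vec.dim (Wj i) = j" using Tprops True W by simp
        have sp: "\<And>i l. i < N \<Longrightarrow> l < N \<Longrightarrow> i \<noteq> l \<Longrightarrow> Wj i \<inter> Wj l = {0}"
        proof -
          fix i l assume "i < N" "l < N" "i \<noteq> l"
          then have "Wj i \<inter> Wj l \<subseteq> {0}" using disj[of i l] Tprops[of i j] Tprops[of l j] True W by blast
          moreover have "0 \<in> Wj i \<inter> Wj l" using f1 \<open>i < N\<close> \<open>l < N\<close> vec.subspace_0 by blast
          ultimately show "Wj i \<inter> Wj l = {0}" by blast
        qed
        have "inj_on Wj {..<N}"
        proof (rule inj_onI, rule ccontr)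
          fix i l assume "i \<in> {..<N}" "l \<in> {..<N}" "Wj i = Wj l" "i \<noteq> l"
          then have "Wj i \<subseteq> {0}" using sp by force
          then have "vec.dim (Wj i) = 0" by simp
          moreover have "vec.dim (Wj i) = j" using f1 \<open>i \<in> {..<N}\<close> by simp
          ultimately show False using j by simp
        qed
        moreover have "\<forall>U\<in>Wj ` {..<N}. \<forall>V\<in>Wj ` {..<N}. U \<noteq> V \<longrightarrow> U \<inter> V = {0}"
        proof (intro ballI impI)
          fix U V assume "U \<in> Wj ` {..<N}" "V \<in> Wj ` {..<N}" "U \<noteq> V"
          then obtain i l where "i < N" "l < N" "U = Wj i" "V = Wj l" by blast
          with \<open>U \<noteq> V\<close> sp show "U \<inter> V = {0}" by blast
        qed
        ultimately show ?thesis using f1 True by simp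
      next
        case False
        then have kj: "k < j" by simp
        have f1: "\<forall>i<N. vec.subspace (Wj i) \<and> vec.dim (Wj i) = j"
        proof (intro allI impI)
          fix i assume i: "i < N"
          let ?i' = "Suc i mod N"
          have t: "vec.subspace (T ?i' (j - k)) \<and> vec.dim (T ?i' (j - k)) = j - k \<and> T ?i' (j - k) \<subseteq> Sp ?i'"
          proof -
            have "j - k \<le> k" using j by auto
            then show ?thesis using Tprops[of ?i' "j - k"] nxt[OF i] by blast
          qed
          have "Sp i \<inter> Sp ?i' = {0}" using disj[of i ?i'] nxt[OF i] i by metis
          then have "Sp i \<inter> T ?i' (j - k) \<subseteq> {0}" using t by blast
          then have "vec.dim (Sp i \<inter> T ?i' (j - k)) = 0" by simp
          have e1: "vec.dim (vec.span (Sp i \<union> T ?i' (j - k))) + vec.dim (Sp i \<inter> T ?i' (j - k))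
              = vec.dim (Sp i) + vec.dim (T ?i' (j - k))"
            by (rule dimUn[OF Spsub[OF i]]) (use t in blast)
          have "vec.dim (vec.span (Sp i \<union> T ?i' (j - k))) = j"
            using e1 \<open>vec.dim (Sp i \<inter> T ?i' (j - k)) = 0\<close> t Spdim[OF i] kj by linarith
          then have "vec.dim (Wj i) = j"
            unfolding Wj_def Whigh[OF kj i] .
          then show "vec.subspace (Wj i) \<and> vec.dim (Wj i) = j"
            unfolding Wj_def using Whigh[OF kj i] by simp
        qed
        have SpW: "Sp i \<subseteq> Wj i" if i: "i < N" for i
        proof -
          have "Sp i \<subseteq> vec.span (Sp i \<union> T (Suc i mod N) (j - k))"
            using vec.span_superset[of "Sp i \<union> T (Suc i mod N) (j - k)"] by blast
          then show ?thesis unfolding Wj_def Whigh[OF kj i] .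
        qed
        have big: "vec.dim (vec.span (Wj i \<union> Wj l)) = 2 * k" if "i < N" "l < N" "i \<noteq> l" for i l
        proof -
          have "vec.dim (Sp i \<inter> Sp l) = 0" using disj[OF that] by simp
          then have "vec.dim (vec.span (Sp i \<union> Sp l)) = 2 * k"
            using dimUn[OF Spsub[OF that(1)] Spsub[OF that(2)]] Spdim[OF that(1)] Spdim[OF that(2)]
              \<open>vec.dim (Sp i \<inter> Sp l) = 0\<close> by linarith
          moreover have "vec.span (Sp i \<union> Sp l) \<subseteq> vec.span (Wj i \<union> Wj l)"
            using SpW that by (intro vec.span_mono) blast
          ultimately have "vec.dim (vec.span (Wj i \<union> Wj l)) \<ge> 2 * k"
            using vec.dim_subset[of "vec.span (Sp i \<union> Sp l)" "vec.span (Wj i \<union> Wj l)"] by linarith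
          then show ?thesis using dimle[of "vec.span (Wj i \<union> Wj l)"] by linarith
        qed
        have pair: "vec.dim (Wj i \<inter> Wj l) = 2 * (j - k) \<and> subspace_dist (Wj i) (Wj l) = 2 * (2 * k - j)"
          if "i < N" "l < N" "i \<noteq> l" for i l
        proof -
          have s1: "vec.subspace (Wj i)" "vec.subspace (Wj l)" "vec.dim (Wj i) = j" "vec.dim (Wj l) = j"
            using f1 that by blast+
          have "vec.dim (vec.span (Wj i \<union> Wj l)) + vec.dim (Wj i \<inter> Wj l) = vec.dim (Wj i) + vec.dim (Wj l)"
            by (rule dimUn[OF s1(1,2)])
          then have e: "vec.dim (Wj i \<inter> Wj l) = 2 * (j - k)" using big[OF that] kj s1(3,4) by linarith
          have "subspace_dist (Wj i) (Wj l) = 2 * k - 2 * (j - k)"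
            unfolding subspace_dist_def big[OF that] e ..
          then show ?thesis using e j kj by linarith
        qed
        have "inj_on Wj {..<N}"
        proof (rule inj_onI, rule ccontr)
          fix i l assume "i \<in> {..<N}" "l \<in> {..<N}" "Wj i = Wj l" "i \<noteq> l"
          then have b: "vec.dim (vec.span (Wj i \<union> Wj l)) = 2 * k" using big by blast
          have s1: "vec.subspace (Wj i)" "vec.dim (Wj i) = j" using f1 \<open>i \<in> {..<N}\<close> by blast+
          have "vec.span (Wj i \<union> Wj l) = Wj i" using \<open>Wj i = Wj l\<close> s1(1) vec.span_eq_iff[of "Wj i"] by simp
          then have "vec.dim (vec.span (Wj i \<union> Wj l)) = j" using s1(2) by simp
          with b have "2 * k = j" by simp
          then show False using j by auto
        qed
        moreover have "\<forall>U\<in>Wj ` {..<N}. \<forall>V\<in>Wj ` {..<N}. U \<noteq> V \<longrightarrow>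
                   vec.dim (U \<inter> V) = 2 * (j - k) \<and> subspace_dist U V = 2 * (2 * k - j)"
        proof (intro ballI impI)
          fix U V assume "U \<in> Wj ` {..<N}" "V \<in> Wj ` {..<N}" "U \<noteq> V"
          then obtain i l where il: "i < N" "l < N" "U = Wj i" "V = Wj l" by blast
          then have "i \<noteq> l" using \<open>U \<noteq> V\<close> by blast
          then show "vec.dim (U \<inter> V) = 2 * (j - k) \<and> subspace_dist U V = 2 * (2 * k - j)"
            unfolding il(3,4) using pair il(1,2) by blast
        qed
        ultimately show ?thesis using f1 kj by simp
      qed
      then show "\<forall>i<N. vec.subspace (Wj i) \<and> vec.dim (Wj i) = j" "inj_on Wj {..<N}"
        "j \<le> k \<longrightarrow> (\<forall>U\<in>Wj ` {..<N}. \<forall>V\<in>Wj ` {..<N}. U \<noteq> V \<longrightarrow> U \<inter> V = {0})"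
        "k < j \<longrightarrow> (\<forall>U\<in>Wj ` {..<N}. \<forall>V\<in>Wj ` {..<N}. U \<noteq> V \<longrightarrow>
                   vec.dim (U \<inter> V) = 2 * (j - k) \<and> subspace_dist U V = 2 * (2 * k - j))"
        by (fact conjunct1, fact conjunct1[OF conjunct2], fact conjunct1[OF conjunct2[OF conjunct2]],
            fact conjunct2[OF conjunct2[OF conjunct2]])
    qed
    have card: "card (Wj ` {..<N}) = card SS" using inj cardSS by (simp add: card_image)
    have gen: "\<forall>U V :: ('a ^ 'n) set. vec.subspace U \<and> vec.dim U = j \<and> vec.subspace V \<and> vec.dim V = j
                 \<longrightarrow> subspace_dist U V \<le> 2 * (2 * k - j)"
    proof (intro allI impI)
      fix U V :: "('a ^ 'n) set"
      assume a: "vec.subspace U \<and> vec.dim U = j \<and> vec.subspace V \<and> vec.dim V = j"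
      then have "vec.dim (vec.span (U \<union> V)) + vec.dim (U \<inter> V) = vec.dim U + vec.dim V"
        using dimUn[of U V] by blast
      then have "vec.dim (vec.span (U \<union> V)) + vec.dim (U \<inter> V) = j + j" using a by simp
      moreover have "vec.dim (vec.span (U \<union> V)) \<le> 2 * k" by (rule dimle)
      ultimately show "subspace_dist U V \<le> 2 * (2 * k - j)" unfolding subspace_dist_def by linarith
    qed
    show "(\<forall>i<N. vec.subspace (W_sub k N M i j) \<and> vec.dim (W_sub k N M i j) = j)
         \<and> card ((\<lambda>i. W_sub k N M i j) ` {..<N}) = card SS
         \<and> (j \<le> k \<longrightarrow>
              (\<forall>U\<in>(\<lambda>i. W_sub k N M i j) ` {..<N}. \<forall>V\<in>(\<lambda>i. W_sub k N M i j) ` {..<N}.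
                 U \<noteq> V \<longrightarrow> U \<inter> V = {0}))
         \<and> (k < j \<longrightarrow>
              (\<forall>U\<in>(\<lambda>i. W_sub k N M i j) ` {..<N}. \<forall>V\<in>(\<lambda>i. W_sub k N M i j) ` {..<N}.
                 U \<noteq> V \<longrightarrow> vec.dim (U \<inter> V) = 2 * (j - k)
                        \<and> subspace_dist U V = 2 * (2 * k - j))
            \<and> (\<forall>U V :: ('a ^ 'n) set. vec.subspace U \<and> vec.dim U = j \<and> vec.subspace V \<and> vec.dim V = j
                 \<longrightarrow> subspace_dist U V \<le> 2 * (2 * k - j)))"
    proof (intro conjI)
      show "\<forall>i<N. vec.subspace (W_sub k N M i j) \<and> vec.dim (W_sub k N M i j) = j"
        using fact1 unfolding Wj_def .
      show "card ((\<lambda>i. W_sub k N M i j) ` {..<N}) = card SS"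
        using card unfolding Wj_def[abs_def] .
      show "j \<le> k \<longrightarrow>
              (\<forall>U\<in>(\<lambda>i. W_sub k N M i j) ` {..<N}. \<forall>V\<in>(\<lambda>i. W_sub k N M i j) ` {..<N}.
                 U \<noteq> V \<longrightarrow> U \<inter> V = {0})"
        using low unfolding Wj_def[abs_def] .
      show "k < j \<longrightarrow>
              (\<forall>U\<in>(\<lambda>i. W_sub k N M i j) ` {..<N}. \<forall>V\<in>(\<lambda>i. W_sub k N M i j) ` {..<N}.
                 U \<noteq> V \<longrightarrow> vec.dim (U \<inter> V) = 2 * (j - k)
                        \<and> subspace_dist U V = 2 * (2 * k - j))
            \<and> (\<forall>U V :: ('a ^ 'n) set. vec.subspace U \<and> vec.dim U = j \<and> vec.subspace V \<and> vec.dim V = j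
                 \<longrightarrow> subspace_dist U V \<le> 2 * (2 * k - j))"
        using high gen unfolding Wj_def[abs_def] by blast
    qed
  qed
qed

end
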